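(* Let $(X,d)$ be a metric space, $Y$ a complete subspace of $X$, and $T,g:X\to X$. Assume: (a) $T(X)\subseteq Y\cap g(X)$; (b) there exists $G\in\mathcal{G}$ such that for all $x,y\in X$, $$G\big(d(Tx,Ty),\,d(gx,gy),\,d(gx,Tx),\,d(gy,Ty),\,d(gx,Ty),\,d(gy,Tx)\big)\le0;$$ and either (e) $Y\subseteq g(X)$, or alternatively (e$'$) $T$ and $g$ are compatible and $T$ and $g$ are continuous. Then $T$ and $g$ have a coincidence point.
   Context: $\mathbb{R}_+=[0,\infty)$. $\Phi$: functions $\phi:\mathbb{R}_+\to\mathbb{R}_+$, increasing, $\phi(0)=0$, $\sum_{n\ge1}\phi^n(t)<\infty$ for every $t>0$. $\mathcal{G}$: lower semi-continuous $G:\mathbb{R}_+^6\to\mathbb{R}$ such that (G1) $G$ is decreasing in its fifth and sixth variables, and there is $\phi\in\Phi$ such that for all $r,s\ge0$, $G(r,s,s,r,r+s,0)\le0$ implies $r\le\phi(s)$; (G2) $G(r,0,r,0,0,r)>0$ for all $r>0$. $T$ and $g$ are compatible if $\lim_n d(T(gx_n),g(Tx_n))=0$ whenever $\{x_n\}\subset X$ satisfies $\lim_n gx_n=\lim_n Tx_n$. A coincidence point is $x$ with $Tx=gx$. *)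

theory Defs
  imports "HOL-Analysis.Analysis"
begin

type_synonym real6 = "real \<times> real \<times> real \<times> real \<times> real \<times> real"

definition nonneg6 :: "real6 set" where
  "nonneg6 = {(a,b,c,d,e,f). 0 \<le> a \<and> 0 \<le> b \<and> 0 \<le> c \<and> 0 \<le> d \<and> 0 \<le> e \<and> 0 \<le> f}"

definition lsc_on :: "'a::topological_space set \<Rightarrow> ('a \<Rightarrow> real) \<Rightarrow> bool" where
  "lsc_on S f \<longleftrightarrow> (\<forall>x\<in>S. \<forall>e>0. \<forall>\<^sub>F y in at x within S. f x - e < f y)"

definition PhiClass :: "(real \<Rightarrow> real) set" where
  "PhiClass = {\<phi>. (\<forall>t\<ge>0. 0 \<le> \<phi> t) \<and> mono_on {0..} \<phi> \<and> \<phi> 0 = 0 \<and>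
      (\<forall>t>0. summable (\<lambda>n. (\<phi> ^^ Suc n) t))}"

definition GClass :: "(real6 \<Rightarrow> real) set" where
  "GClass = {G. lsc_on nonneg6 G \<and>
     (\<forall>a b c d e e' f. 0 \<le> a \<longrightarrow> 0 \<le> b \<longrightarrow> 0 \<le> c \<longrightarrow> 0 \<le> d \<longrightarrow> 0 \<le> e \<longrightarrow> e \<le> e' \<longrightarrow> 0 \<le> f \<longrightarrow>
         G (a,b,c,d,e',f) \<le> G (a,b,c,d,e,f)) \<and>
     (\<forall>a b c d e f f'. 0 \<le> a \<longrightarrow> 0 \<le> b \<longrightarrow> 0 \<le> c \<longrightarrow> 0 \<le> d \<longrightarrow> 0 \<le> e \<longrightarrow> 0 \<le> f \<longrightarrow> f \<le> f' \<longrightarrow>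
         G (a,b,c,d,e,f') \<le> G (a,b,c,d,e,f)) \<and>
     (\<exists>\<phi>\<in>PhiClass. \<forall>r s. 0 \<le> r \<longrightarrow> 0 \<le> s \<longrightarrow> G (r,s,s,r,r+s,0) \<le> 0 \<longrightarrow> r \<le> \<phi> s) \<and>
     (\<forall>r>0. G (r,0,r,0,0,r) > 0)}"

definition compatible :: "('a::metric_space \<Rightarrow> 'a) \<Rightarrow> ('a \<Rightarrow> 'a) \<Rightarrow> bool" where
  "compatible T g \<longleftrightarrow> (\<forall>x :: nat \<Rightarrow> 'a. (\<exists>t. (\<lambda>n. g (x n)) \<longlonglongrightarrow> t \<and> (\<lambda>n. T (x n)) \<longlonglongrightarrow> t) \<longrightarrow>
      (\<lambda>n. dist (T (g (x n))) (g (T (x n)))) \<longlonglongrightarrow> 0)"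

end

theory Submission
  imports Defs
begin

lemma cauchy_of_sum_bound:
  fixes y :: "nat \<Rightarrow> 'a::metric_space"
  assumes sd: "summable d" and b: "\<And>n. dist (y n) (y (Suc n)) \<le> d n"
  shows "Cauchy y"
proof -
  define s where "s = (\<lambda>n. \<Sum>i<n. d i)"
  have cs: "Cauchy s" using sd unfolding s_def summable_iff_convergent by (rule convergent_Cauchy)
  have le: "dist (y m) (y n) \<le> s n - s m" if "m \<le> n" for m n
    using that
  proof (induction n rule: dec_induct)
    case base then show ?case by simp
  next
    case (step n)
    have "dist (y m) (y (Suc n)) \<le> dist (y m) (y n) + dist (y n) (y (Suc n))"
      by (rule dist_triangle)
    also have "\<dots> \<le> s n - s m + d n" using step b[of n] by linarith
    also have "\<dots> = s (Suc n) - s m" by (simp add: s_def)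
    finally show ?case .
  qed
  show ?thesis
  proof (rule metric_CauchyI)
    fix e :: real assume "0 < e"
    then obtain M where M: "\<forall>m\<ge>M. \<forall>n\<ge>M. dist (s m) (s n) < e"
      using cs unfolding Cauchy_def by blast
    have "dist (y m) (y n) < e" if "m \<ge> M" "n \<ge> M" for m n
    proof (cases "m \<le> n")
      case True
      then have "dist (y m) (y n) \<le> s n - s m" by (rule le)
      moreover have "dist (s m) (s n) < e" using M that by blast
      ultimately show ?thesis by (simp add: dist_real_def)
    next
      case False
      then have "dist (y n) (y m) \<le> s m - s n" by (intro le) simp
      moreover have "dist (s m) (s n) < e" using M that by blast
      ultimately show ?thesis by (simp add: dist_real_def dist_commute)
    qed
    then show "\<exists>M. \<forall>m\<ge>M. \<forall>n\<ge>M. dist (y m) (y n) < e" by blast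
  qed
qed

lemma lsc_seq:
  fixes f :: "'b::metric_space \<Rightarrow> real"
  assumes "lsc_on S f" "p \<in> S" "\<And>n. q n \<in> S" "q \<longlonglongrightarrow> p" "\<And>n. f (q n) \<le> 0"
  shows "f p \<le> 0"
proof (rule ccontr)
  assume "\<not> f p \<le> 0"
  then have fp: "f p > 0" by simp
  have "\<forall>\<^sub>F y in at p within S. f p - f p < f y"
    using assms(1,2) fp unfolding lsc_on_def by blast
  then obtain d where d: "d > 0" "\<forall>x\<in>S. x \<noteq> p \<and> dist x p < d \<longrightarrow> 0 < f x"
    unfolding eventually_at by auto
  obtain N where "\<forall>n\<ge>N. dist (q n) p < d" using assms(4) d(1) unfolding lim_sequentially by blast
  then have "dist (q N) p < d" by simp
  then show False
    using d(2) assms(3)[of N] assms(5)[of N] fp by (cases "q N = p") force+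
qed

lemma GClassD: assumes "G \<in> GClass"
  shows "lsc_on nonneg6 G"
  and "\<And>a b c d e e' f. 0 \<le> a \<Longrightarrow> 0 \<le> b \<Longrightarrow> 0 \<le> c \<Longrightarrow> 0 \<le> d \<Longrightarrow> 0 \<le> e \<Longrightarrow> e \<le> e' \<Longrightarrow> 0 \<le> f \<Longrightarrow>
         G (a,b,c,d,e',f) \<le> G (a,b,c,d,e,f)"
  and "\<exists>\<phi>\<in>PhiClass. \<forall>r s. 0 \<le> r \<longrightarrow> 0 \<le> s \<longrightarrow> G (r,s,s,r,r+s,0) \<le> 0 \<longrightarrow> r \<le> \<phi> s"
  and "\<And>r. r>0 \<Longrightarrow> G (r,0,r,0,0,r) > 0"
  using assms unfolding GClass_def mem_Collect_eq by simp_all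
lemma PhiD: assumes "\<phi> \<in> PhiClass"
  shows "\<And>t. t \<ge> 0 \<Longrightarrow> 0 \<le> \<phi> t" "mono_on {0..} \<phi>" "\<phi> 0 = 0" "\<And>t. t>0 \<Longrightarrow> summable (\<lambda>n. (\<phi> ^^ Suc n) t)"
  using assms unfolding PhiClass_def mem_Collect_eq by simp_all

lemma phi_nonneg: "\<phi> \<in> PhiClass \<Longrightarrow> t \<ge> 0 \<Longrightarrow> (\<phi> ^^ n) t \<ge> 0"
  by (induction n) (auto simp: PhiD)

theorem corollary4:
  fixes T g :: "'a::metric_space \<Rightarrow> 'a" and Y :: "'a set"
  assumes "complete Y"
    and "range T \<subseteq> Y \<inter> range g"
    and "\<exists>G\<in>GClass. \<forall>x y. G (dist (T x) (T y), dist (g x) (g y), dist (g x) (T x),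
                             dist (g y) (T y), dist (g x) (T y), dist (g y) (T x)) \<le> 0"
    and "Y \<subseteq> range g \<or> (compatible T g \<and> continuous_on UNIV T \<and> continuous_on UNIV g)"
  shows "\<exists>x. T x = g x"
proof -
  obtain G where GG: "G \<in> GClass" and Gle: "\<And>x y. G (dist (T x) (T y), dist (g x) (g y), dist (g x) (T x),
                             dist (g y) (T y), dist (g x) (T y), dist (g y) (T x)) \<le> 0"
    using assms(3) by blast
  obtain \<phi> where phi: "\<phi> \<in> PhiClass"
    and G1': "\<forall>r s. 0 \<le> r \<longrightarrow> 0 \<le> s \<longrightarrow> G (r,s,s,r,r+s,0) \<le> 0 \<longrightarrow> r \<le> \<phi> s"
    using GClassD(3)[OF GG] by blast
  have G1: "\<And>r s. 0 \<le> r \<Longrightarrow> 0 \<le> s \<Longrightarrow> G (r,s,s,r,r+s,0) \<le> 0 \<Longrightarrow> r \<le> \<phi> s"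
    using G1' by blast
  note G5 = GClassD(2)[OF GG]
  note G2 = GClassD(4)[OF GG]
  note lsc = GClassD(1)[OF GG]
  have phimono: "\<And>a b. 0 \<le> a \<Longrightarrow> a \<le> b \<Longrightarrow> \<phi> a \<le> \<phi> b"
    using PhiD(2)[OF phi] unfolding mono_on_def by auto
  note phi0 = PhiD(3)[OF phi]
  note phisum = PhiD(4)[OF phi]
  define x0 :: 'a where "x0 = undefined"
  define x where "x = rec_nat x0 (\<lambda>n v. SOME u. g u = T v)"
  have gx: "g (x (Suc n)) = T (x n)" for n
  proof -
    have "T (x n) \<in> range g" using assms(2) by auto
    then obtain u where u: "g u = T (x n)" by auto
    have xs: "x (Suc n) = (SOME u. g u = T (x n))" by (simp add: x_def)
    show ?thesis unfolding xs by (rule someI[of "\<lambda>u. g u = T (x n)", OF u])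
  qed
  define y where "y n = T (x n)" for n
  have step: "dist (y (Suc n)) (y (Suc (Suc n))) \<le> \<phi> (dist (y n) (y (Suc n)))" for n
  proof -
    let ?r = "dist (y (Suc n)) (y (Suc (Suc n)))"
    let ?s = "dist (y n) (y (Suc n))"
    have "G (?r, ?s, ?s, ?r, dist (y n) (y (Suc (Suc n))), 0) \<le> 0"
      using Gle[of "x (Suc n)" "x (Suc (Suc n))"] by (simp add: gx y_def)
    moreover have "G (?r, ?s, ?s, ?r, ?r + ?s, 0) \<le> G (?r, ?s, ?s, ?r, dist (y n) (y (Suc (Suc n))), 0)"
      by (rule G5) (auto intro: order.trans[OF dist_triangle] simp: add.commute)
    ultimately show ?thesis by (intro G1) auto
  qed
  define t where "t = dist (y 0) (y 1)"
  have bound: "dist (y n) (y (Suc n)) \<le> (\<phi> ^^ n) t" for n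
  proof (induction n)
    case 0 then show ?case by (simp add: t_def)
  next
    case (Suc n)
    have "dist (y (Suc n)) (y (Suc (Suc n))) \<le> \<phi> (dist (y n) (y (Suc n)))" by (rule step)
    also have "\<dots> \<le> \<phi> ((\<phi> ^^ n) t)" by (rule phimono) (auto simp: Suc)
    finally show ?case by simp
  qed
  have summ: "summable (\<lambda>n. (\<phi> ^^ n) t)"
  proof (cases "t = 0")
    case True
    have "(\<phi> ^^ n) 0 = 0" for n by (induction n) (auto simp: phi0)
    then show ?thesis using True by simp
  next
    case False
    then have "t > 0" by (simp add: t_def)
    then show ?thesis using phisum summable_Suc_iff by blast
  qed
  have cy: "Cauchy y" by (rule cauchy_of_sum_bound[OF summ bound])
  have yY: "y n \<in> Y" for n using assms(2) by (auto simp: y_def)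
  obtain z where zY: "z \<in> Y" and lim: "y \<longlonglongrightarrow> z"
    using assms(1) cy yY unfolding complete_def by blast
  from assms(4) show ?thesis
  proof
    assume "Y \<subseteq> range g"
    then obtain u where zu: "z = g u" using zY by blast
    define q where "q n = (dist (T u) (y (Suc n)), dist z (y n), dist z (T u),
        dist (y n) (y (Suc n)), dist z (y (Suc n)), dist (y n) (T u))" for n
    define p where "p = (dist (T u) z, 0::real, dist z (T u), 0::real, 0::real, dist z (T u))"
    have lim1: "(\<lambda>n. y (Suc n)) \<longlonglongrightarrow> z" using lim by (rule LIMSEQ_Suc)
    have d0: "(\<lambda>n. dist z (y n)) \<longlonglongrightarrow> 0" using tendsto_dist[OF tendsto_const lim, of z] by simp
    have d1: "(\<lambda>n. dist z (y (Suc n))) \<longlonglongrightarrow> 0" using tendsto_dist[OF tendsto_const lim1, of z] by simp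
    have d2: "(\<lambda>n. dist (y n) (y (Suc n))) \<longlonglongrightarrow> 0" using tendsto_dist[OF lim lim1] by simp
    have "q \<longlonglongrightarrow> p"
    proof -
      have e1: "(\<lambda>n. dist (T u) (y (Suc n))) \<longlonglongrightarrow> dist (T u) z" by (rule tendsto_dist[OF tendsto_const lim1])
      have e2: "(\<lambda>n. dist (y n) (T u)) \<longlonglongrightarrow> dist z (T u)" by (rule tendsto_dist[OF lim tendsto_const])
      show ?thesis unfolding q_def p_def by (rule tendsto_Pair e1 d0 d1 d2 e2 tendsto_const)+
    qed
    moreover have "G (q n) \<le> 0" for n
      using Gle[of u "x (Suc n)"] unfolding q_def by (simp only: gx zu[symmetric] y_def[symmetric])
    ultimately have "G p \<le> 0"
      by (rule lsc_seq[OF lsc, rotated 2]) (auto simp: nonneg6_def p_def q_def)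
    then have "dist (T u) z = 0" using G2[of "dist (T u) z"] by (auto simp: p_def dist_commute)
    then show ?thesis using zu by auto
  next
    assume H: "compatible T g \<and> continuous_on UNIV T \<and> continuous_on UNIV g"
    have yf: "y = (\<lambda>n. T (x n))" by (simp add: y_def fun_eq_iff)
    have l1: "(\<lambda>n. g (x (Suc n))) \<longlonglongrightarrow> z" using lim unfolding gx yf .
    have l2: "(\<lambda>n. T (x (Suc n))) \<longlonglongrightarrow> z" using LIMSEQ_Suc[OF lim] unfolding yf .
    have c0: "(\<lambda>n. dist (T (g (x (Suc n)))) (g (T (x (Suc n))))) \<longlonglongrightarrow> 0"
    proof -
      have "\<forall>x. (\<exists>t. (\<lambda>n. g (x n)) \<longlonglongrightarrow> t \<and> (\<lambda>n. T (x n)) \<longlonglongrightarrow> t) \<longrightarrow>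
        (\<lambda>n. dist (T (g (x n))) (g (T (x n)))) \<longlonglongrightarrow> 0" using H unfolding compatible_def by blast
      from spec[OF this, of "\<lambda>n. x (Suc n)"] l1 l2 show ?thesis by blast
    qed
    have cT: "isCont T z" and cg: "isCont g z"
      using H continuous_on_eq_continuous_at[of UNIV] by auto
    have "(\<lambda>n. dist (T (g (x (Suc n)))) (g (T (x (Suc n))))) \<longlonglongrightarrow> dist (T z) (g z)"
      by (intro tendsto_dist isCont_tendsto_compose[OF cT l1] isCont_tendsto_compose[OF cg l2])
    then have "dist (T z) (g z) = 0" using c0 LIMSEQ_unique by blast
    then show ?thesis by auto
  qed
qed

end
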